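(* Let $x\in S\setminus W$ and $y\in S\setminus(W\cup\{x\})$. For each $\lambda\ge0$, the Perron roots $\rho(D(\lambda))$, $\rho(D(x;\lambda))$ and $\rho(D(x,y;\lambda))$ are simultaneously greater than $1$, equal to $1$, or less than $1$.
   Context: CBP setting. $S$ finite or countable; $\eta$ irreducible continuous-time Markov chain on $S$ with conservative infinitesimal matrix $Q=(q(x,y))$ ($q(x,y)\ge0$ for $x\ne y$, $q(x,x)\in(-\infty,0)$, row sums $0$). Distinct catalysts $W=\{w_1,\dots,w_N\}\subset S$; for $k\le N$, $\beta_k>0$, $\alpha_k\in[0,1)$, and $f_k$ the generating function of a nonnegative integer random variable with $f_k'(1)<\infty$. Hitting times under taboo: for $u,v\in S$, $H\subset S$, ${}_H\overline\tau_{u,v}$ is the time spent by $\eta$ started at $u$, after leaving $u$, until the first hitting of $v$ if $H$ is not visited before; otherwise $\infty$. ${}_H\overline F_{u,v}$ is its improper distribution function and ${}_H\overline F^*_{u,v}(\lambda)=\int_{0-}^\infty e^{-\lambda t}d\,{}_H\overline F_{u,v}(t)$, $\lambda\ge0$. For a finite set $V=\{v_1,\dots,v_n\}\subset S$ of distinct points with parameters $\alpha_i,\beta_i,f_i$ attached, define the $n\times n$ matrix $D_V(\lambda)$ with entries $\delta_{i,j}\alpha_if_i'(1)G_i^*(\lambda)+(1-\alpha_i)G_i^*(\lambda)\,{}_{V\setminus\{v_j\}}\overline F^*_{v_i,v_j}(\lambda)$. Then $D(\lambda)=D_W(\lambda)$ with $G_i^*(\lambda)=\beta_i/(\lambda+\beta_i)$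 for $i\le N$. Set $w_{N+1}=x$, $w_{N+2}=y$, $\alpha_{N+1}=\alpha_{N+2}=0$, $f'_{N+1}(1)=f'_{N+2}(1)=0$, $G_{N+1}^*(\lambda)=-q(x,x)/(\lambda-q(x,x))$, $G^*_{N+2}(\lambda)=-q(y,y)/(\lambda-q(y,y))$; $D(x;\lambda)=D_{W\cup\{x\}}(\lambda)$ (size $N+1$) and $D(x,y;\lambda)=D_{W\cup\{x,y\}}(\lambda)$ (size $N+2$). $\rho(A)$ denotes the Perron root of an irreducible nonnegative matrix $A$. *)

theory Defs
  imports "HOL-Probability.Probability" "Jordan_Normal_Form.Spectral_Radius"
begin

definition conservative_Q :: "('s \<Rightarrow> 's \<Rightarrow> real) \<Rightarrow> bool" where
  "conservative_Q q \<longleftrightarrow>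
     (\<forall>a b. a \<noteq> b \<longrightarrow> q a b \<ge> 0) \<and> (\<forall>a. q a a < 0) \<and>
     (\<forall>a. ((\<lambda>b. q a b) has_sum 0) UNIV)"

definition irreducible_Q :: "('s \<Rightarrow> 's \<Rightarrow> real) \<Rightarrow> bool" where
  "irreducible_Q q \<longleftrightarrow> (\<forall>a b. (a, b) \<in> {(c, d). c \<noteq> d \<and> q c d > 0}\<^sup>*)"

definition jump_prob :: "('s \<Rightarrow> 's \<Rightarrow> real) \<Rightarrow> 's \<Rightarrow> 's \<Rightarrow> real" where
  "jump_prob q a b = (if a = b then 0 else q a b / (- q a a))"

text \<open>Contribution of the jump path u, z_1, ..., z_(k-1), v (zs = [z_1,...,z_(k-1)]) to the
  Laplace transform of the time spent after leaving u until hitting v: the product of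
  the jump probabilities times the Laplace transforms -q(z,z)/(lam - q(z,z)) of the
  exponential holding times in the intermediate states.\<close>
definition path_weight :: "('s \<Rightarrow> 's \<Rightarrow> real) \<Rightarrow> 's \<Rightarrow> 's list \<Rightarrow> 's \<Rightarrow> real \<Rightarrow> real" where
  "path_weight q u zs v lam =
     (let p = u # zs @ [v] in
       (\<Prod>i<length p - 1. jump_prob q (p ! i) (p ! Suc i)) *
       (\<Prod>z\<leftarrow>zs. (- q z z) / (lam - q z z)))"

text \<open>Laplace--Stieltjes transform of the improper distribution of the taboo hitting time
  H-tau_{u,v}:  E_u[exp(-lam * tau); tau < infinity], where tau is the time spent after
  leaving u until the first hit of v, and tau = infinity if H is visited (after leaving u)
  before v.  Computed via the jump-hold description of the (minimal) chain.\<close>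
definition taboo_Fstar :: "('s::countable \<Rightarrow> 's \<Rightarrow> real) \<Rightarrow> 's set \<Rightarrow> 's \<Rightarrow> 's \<Rightarrow> real \<Rightarrow> real" where
  "taboo_Fstar q H u v lam =
     enn2real (\<integral>\<^sup>+ zs. ennreal (path_weight q u zs v lam)
                 \<partial>count_space {zs. \<forall>z\<in>set zs. z \<notin> H \<and> z \<noteq> v})"

text \<open>D_V(lam) for V = {v 0, ..., v (n-1)} (0-based indices), with parameters
  alpha i, mean offspring m i = f_i'(1) and transforms G i lam.\<close>
definition D_mat :: "('s::countable \<Rightarrow> 's \<Rightarrow> real) \<Rightarrow> nat \<Rightarrow> (nat \<Rightarrow> 's) \<Rightarrow> (nat \<Rightarrow> real)
     \<Rightarrow> (nat \<Rightarrow> real) \<Rightarrow> (nat \<Rightarrow> real \<Rightarrow> real) \<Rightarrow> real \<Rightarrow> real mat" where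
  "D_mat q n v alpha m G lam =
     mat n n (\<lambda>(i, j). (if i = j then alpha i * m i * G i lam else 0)
        + (1 - alpha i) * G i lam * taboo_Fstar q (v ` {..<n} - {v j}) (v i) (v j) lam)"

text \<open>Generating-function derivative at 1 = mean of the offspring law.\<close>
definition gf_deriv1 :: "nat pmf \<Rightarrow> real" where
  "gf_deriv1 p = measure_pmf.expectation p real"

definition perron_root :: "real mat \<Rightarrow> real" where
  "perron_root A = spectral_radius (map_mat complex_of_real A)"

end

theory Submission
  imports Defs
begin


lemma mult_entry:
  fixes A B :: "'a::comm_semiring_0 mat"
  assumes "A \<in> carrier_mat n n" "B \<in> carrier_mat n n" "i < n" "j < n"
  shows "(A * B) $$ (i,j) = (\<Sum>l<n. A $$ (i,l) * B $$ (l,j))"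
  using assms by (simp add: scalar_prod_def lessThan_atLeast0)

lemma pow_nonneg:
  fixes A :: "real mat"
  assumes A: "A \<in> carrier_mat n n" and nn: "\<forall>i<n. \<forall>j<n. A$$(i,j) \<ge> 0"
  shows "\<forall>i<n. \<forall>j<n. (A ^\<^sub>m k)$$(i,j) \<ge> 0"
proof (induct k)
  case 0 then show ?case using A by auto
next
  case (Suc k) show ?case
  proof (intro allI impI)
    fix i j assume ij: "i < n" "j < n"
    show "0 \<le> (A ^\<^sub>m Suc k) $$ (i, j)"
      unfolding pow_mat.simps mult_entry[OF pow_carrier_mat[OF A] A ij]
      using Suc ij nn by (auto intro!: sum_nonneg)
  qed
qed

lemma pow_bound:
  fixes A :: "real mat"
  assumes A: "A \<in> carrier_mat n n" and nn: "\<forall>i<n. \<forall>j<n. A$$(i,j) \<ge> 0"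
    and t: "t \<ge> 0" and u: "\<forall>i<n. u i \<ge> 0"
    and b: "\<forall>i<n. (\<Sum>j<n. A$$(i,j) * u j) \<le> t * u i"
  shows "\<forall>i<n. (\<Sum>j<n. (A ^\<^sub>m k)$$(i,j) * u j) \<le> t^k * u i"
proof (induct k)
  case 0
  show ?case
  proof (intro allI impI)
    fix i assume i: "i < n"
    have "(\<Sum>j<n. (A ^\<^sub>m 0)$$(i,j) * u j) = (\<Sum>j<n. (if i = j then u j else 0))"
      using A i by (intro sum.cong) auto
    also have "\<dots> = u i" using i by simp
    finally show "(\<Sum>j<n. (A ^\<^sub>m 0)$$(i,j) * u j) \<le> t^0 * u i" by simp
  qed
next
  case (Suc k)
  show ?case
  proof (intro allI impI)
    fix i assume i: "i < n"
    let ?P = "A ^\<^sub>m k"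
    have P: "?P \<in> carrier_mat n n" using A by simp
    have Pnn: "\<forall>i<n. \<forall>j<n. ?P$$(i,j) \<ge> 0" using pow_nonneg[OF A nn] by blast
    have "(\<Sum>j<n. (A ^\<^sub>m Suc k)$$(i,j) * u j) = (\<Sum>j<n. (\<Sum>l<n. ?P$$(i,l) * A$$(l,j)) * u j)"
      using mult_entry[OF P A i] by (intro sum.cong) auto
    also have "\<dots> = (\<Sum>j<n. (\<Sum>l<n. ?P$$(i,l) * A$$(l,j) * u j))"
      by (simp add: sum_distrib_right)
    also have "\<dots> = (\<Sum>l<n. (\<Sum>j<n. ?P$$(i,l) * A$$(l,j) * u j))"
      by (rule sum.swap)
    also have "\<dots> = (\<Sum>l<n. ?P$$(i,l) * (\<Sum>j<n. A$$(l,j) * u j))"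
      by (simp add: sum_distrib_left mult.assoc)
    also have "\<dots> \<le> (\<Sum>l<n. ?P$$(i,l) * (t * u l))"
      using Pnn b i by (intro sum_mono mult_left_mono) auto
    also have "\<dots> = t * (\<Sum>l<n. ?P$$(i,l) * u l)"
      by (simp add: sum_distrib_left algebra_simps)
    also have "\<dots> \<le> t * (t^k * u i)" using Suc i t by (intro mult_left_mono) auto
    finally show "(\<Sum>j<n. (A ^\<^sub>m Suc k)$$(i,j) * u j) \<le> t^Suc k * u i" by simp
  qed
qed


lemma crit_lt:
  fixes A :: "real mat"
  assumes A: "A \<in> carrier_mat n n" and n: "n > 0" and nn: "\<forall>i<n. \<forall>j<n. A$$(i,j) \<ge> 0"
    and r: "r > 0" and upos: "\<forall>i<n. u i > 0"
    and ub: "\<forall>i<n. (\<Sum>j<n. A$$(i,j) * u j) < r * u i"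
  shows "perron_root A < r"
proof -
  define R where "R i = (\<Sum>j<n. A$$(i,j) * u j) / u i" for i
  define t where "t = max 0 (Max (R ` {..<n}))"
  have fin: "finite (R ` {..<n})" "R ` {..<n} \<noteq> {}" using n by auto
  have Rlt: "R i < r" if "i < n" for i using ub upos that by (simp add: R_def divide_less_eq)
  have t0: "t \<ge> 0" unfolding t_def by simp
  have tr: "t < r" unfolding t_def using Rlt fin r by (auto simp: Max_less_iff)
  have tb: "\<forall>i<n. (\<Sum>j<n. A$$(i,j) * u j) \<le> t * u i"
  proof (intro allI impI)
    fix i assume i: "i<n"
    have "R i \<le> t" unfolding t_def using fin i by (simp add: le_max_iff_disj)
    then show "(\<Sum>j<n. A$$(i,j) * u j) \<le> t * u i" using upos i by (simp add: R_def divide_le_eq)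
  qed
  have u0: "\<forall>i<n. u i \<ge> 0" using upos by (simp add: less_imp_le)
  note pb = pow_bound[OF A nn t0 u0 tb]
  note Pnn = pow_nonneg[OF A nn]
  let ?B = "map_mat complex_of_real A"
  have B: "?B \<in> carrier_mat n n" using A by simp
  have "perron_root A \<in> norm ` spectrum ?B" unfolding perron_root_def by (rule spectral_radius_mem_max(1)[OF B n])
  then obtain mu where mu: "mu \<in> spectrum ?B" and eq: "perron_root A = norm mu" by auto
  from mu obtain v where ev: "eigenvector ?B v mu" unfolding spectrum_def eigenvalue_def by auto
  then have v: "v \<in> carrier_vec n" "v \<noteq> 0\<^sub>v n" "?B *\<^sub>v v = mu \<cdot>\<^sub>v v" unfolding eigenvector_def using A by auto
  from v obtain i where i: "i < n" "v $ i \<noteq> 0" by (metis eq_vecI index_zero_vec carrier_vecD)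
  define K where "K = Max ((\<lambda>j. norm (v$j) / u j) ` {..<n})"
  have vK: "norm (v$j) \<le> K * u j" if "j<n" for j
  proof -
    have "norm (v$j) / u j \<le> K" unfolding K_def using that by (intro Max_ge) auto
    thus ?thesis using upos that by (simp add: divide_le_eq)
  qed
  have K0: "K \<ge> 0"
  proof -
    have "0 \<le> K * u 0" using vK[of 0] n by (meson norm_ge_zero order_trans)
    moreover have "u 0 > 0" using upos n by simp
    ultimately show ?thesis by (simp add: zero_le_mult_iff)
  qed
  have powk: "norm mu ^ k * norm (v$i) \<le> K * (t^k * u i)" for k
  proof -
    have "?B ^\<^sub>m k *\<^sub>v v = mu^k \<cdot>\<^sub>v v" by (rule eigenvector_pow[OF B ev])
    hence "(?B ^\<^sub>m k *\<^sub>v v) $ i = mu^k * v$i" using i v by simp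
    moreover have "(?B ^\<^sub>m k *\<^sub>v v) $ i = (\<Sum>j<n. complex_of_real ((A ^\<^sub>m k) $$ (i,j)) * v$j)"
      unfolding of_real_hom.mat_hom_pow[OF A, of k, symmetric]
      using i v A by (simp add: scalar_prod_def lessThan_atLeast0)
    ultimately have "norm mu ^ k * norm (v$i) = norm (\<Sum>j<n. complex_of_real ((A ^\<^sub>m k) $$ (i,j)) * v$j)"
      by (simp add: norm_mult norm_power)
    also have "\<dots> \<le> (\<Sum>j<n. (A ^\<^sub>m k) $$ (i,j) * norm (v$j))"
      by (rule order_trans[OF norm_sum]) (use Pnn i in \<open>simp add: norm_mult\<close>)
    also have "\<dots> \<le> (\<Sum>j<n. (A ^\<^sub>m k) $$ (i,j) * (K * u j))"
      using Pnn i vK by (intro sum_mono mult_left_mono) auto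
    also have "\<dots> = K * (\<Sum>j<n. (A ^\<^sub>m k) $$ (i,j) * u j)"
      by (simp add: sum_distrib_left algebra_simps)
    also have "\<dots> \<le> K * (t^k * u i)" using pb i K0 by (intro mult_left_mono) auto
    finally show ?thesis .
  qed
  have "norm mu \<le> t"
  proof (rule ccontr)
    assume "\<not> norm mu \<le> t"
    hence lt: "t < norm mu" by simp
    hence "(\<lambda>k. (t / norm mu)^k) \<longlonglongrightarrow> 0" by (intro LIMSEQ_power_zero) (use t0 in \<open>auto simp: divide_less_eq\<close>)
    hence "(\<lambda>k. K * u i * (t / norm mu)^k) \<longlonglongrightarrow> 0" by (intro tendsto_mult_right_zero)
    moreover have "norm (v$i) > 0" using i by simp
    ultimately have "eventually (\<lambda>k. K * u i * (t / norm mu)^k < norm (v$i)) sequentially"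
      by (rule order_tendstoD(2))
    then obtain k where k: "K * u i * (t / norm mu)^k < norm (v$i)"
      by (auto simp: eventually_sequentially)
    have mpos: "norm mu ^ k > 0" using lt t0 by (intro zero_less_power) linarith
    have "K * u i * t^k < norm (v$i) * norm mu^k"
      using k mpos by (simp add: power_divide field_simps)
    with powk[of k] show False by (simp add: algebra_simps)
  qed
  thus ?thesis using eq tr by simp
qed


lemma smult_pow_mat:
  fixes B :: "'a::comm_ring_1 mat"
  assumes B: "B \<in> carrier_mat n n"
  shows "(c \<cdot>\<^sub>m B) ^\<^sub>m k = (c^k) \<cdot>\<^sub>m (B ^\<^sub>m k)"
proof (induct k)
  case 0 show ?case using B by (intro eq_matI) auto
next
  case (Suc k)
  have "(c \<cdot>\<^sub>m B) ^\<^sub>m Suc k = ((c^k) \<cdot>\<^sub>m (B ^\<^sub>m k)) * (c \<cdot>\<^sub>m B)" using Suc by simp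
  also have "\<dots> = (c^Suc k) \<cdot>\<^sub>m (B ^\<^sub>m Suc k)"
    using B by (intro eq_matI) (auto simp: scalar_prod_def sum_distrib_left algebra_simps)
  finally show ?case .
qed

lemma pow_Suc_left:
  fixes A :: "'a::semiring_1 mat"
  assumes A: "A \<in> carrier_mat n n"
  shows "A ^\<^sub>m Suc k = A * A ^\<^sub>m k"
proof (induct k)
  case 0 show ?case using A by simp
next
  case (Suc k)
  have "A ^\<^sub>m Suc (Suc k) = (A * A ^\<^sub>m k) * A" using Suc by simp
  also have "\<dots> = A * (A ^\<^sub>m k * A)" using A by (simp add: assoc_mult_mat[of _ n n _ n _ n])
  finally show ?case by simp
qed

lemma crit_ex:
  fixes A :: "real mat"
  assumes A: "A \<in> carrier_mat n n" and n: "n > 0" and nn: "\<forall>i<n. \<forall>j<n. A$$(i,j) \<ge> 0"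
    and r: "r > 0" and lt: "perron_root A < r"
  shows "\<exists>u. (\<forall>i<n. u i > 0) \<and> (\<forall>i<n. (\<Sum>j<n. A$$(i,j) * u j) < r * u i)"
proof -
  let ?B = "map_mat complex_of_real A"
  have B: "?B \<in> carrier_mat n n" using A by simp
  have "perron_root A \<in> norm ` spectrum ?B" unfolding perron_root_def by (rule spectral_radius_mem_max(1)[OF B n])
  hence rho0: "perron_root A \<ge> 0" by auto
  define s where "s = (perron_root A + r)/2"
  have s: "perron_root A < s" "s < r" "s > 0" using rho0 lt unfolding s_def by auto
  define C where "C = complex_of_real (1/s) \<cdot>\<^sub>m ?B"
  have C: "C \<in> carrier_mat n n" using A unfolding C_def by simp
  have "spectral_radius C < 1"
  proof -
    have "spectral_radius C \<in> norm ` spectrum C" by (rule spectral_radius_mem_max(1)[OF C n])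
    then obtain nu where nu: "nu \<in> spectrum C" "spectral_radius C = norm nu" by auto
    from nu obtain v where ev: "eigenvector C v nu" unfolding spectrum_def eigenvalue_def by auto
    hence v: "v \<in> carrier_vec n" "v \<noteq> 0\<^sub>v n" "C *\<^sub>v v = nu \<cdot>\<^sub>v v" using C by (auto simp: eigenvector_def)
    have "?B *\<^sub>v v = (complex_of_real s * nu) \<cdot>\<^sub>v v"
    proof (rule eq_vecI)
      fix i assume i: "i < dim_vec ((complex_of_real s * nu) \<cdot>\<^sub>v v)"
      hence i': "i < n" using v by simp
      have "(C *\<^sub>v v) $ i = (nu \<cdot>\<^sub>v v) $ i" using v by simp
      hence "complex_of_real (1/s) * (row ?B i \<bullet> v) = nu * v $ i"
        using i' v A unfolding C_def by (simp add: scalar_prod_def sum_distrib_left algebra_simps)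
      hence "row ?B i \<bullet> v = complex_of_real s * nu * v $ i" using s
        by (simp add: field_simps)
      thus "(?B *\<^sub>v v) $ i = ((complex_of_real s * nu) \<cdot>\<^sub>v v) $ i" using i' v A by simp
    qed (use v A in simp)
    hence "eigenvector ?B v (complex_of_real s * nu)" using v A unfolding eigenvector_def by simp
    hence "complex_of_real s * nu \<in> spectrum ?B" unfolding spectrum_def eigenvalue_def by auto
    hence "norm (complex_of_real s * nu) \<le> perron_root A"
      unfolding perron_root_def by (intro spectral_radius_mem_max(2)[OF B n]) auto
    hence "s * norm nu \<le> perron_root A" using s by (simp add: norm_mult)
    hence "s * norm nu < s * 1" using s by linarith
    thus ?thesis using nu s mult_less_cancel_left_pos[of s "norm nu" 1] by simp
  qed
  then obtain c where c: "\<forall>k. norm_bound (C ^\<^sub>m k) c"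
    using spectral_radius_jnf_norm_bound_less_1_upper_triangular[OF C] by auto
  note Pnn = pow_nonneg[OF A nn]
  have Abound: "(A ^\<^sub>m k) $$ (i,j) \<le> c * s^k" if "i<n" "j<n" for i j k
  proof -
    have "C ^\<^sub>m k = complex_of_real (1/s) ^ k \<cdot>\<^sub>m (?B ^\<^sub>m k)" unfolding C_def by (rule smult_pow_mat[OF B])
    also have "?B ^\<^sub>m k = map_mat complex_of_real (A ^\<^sub>m k)" by (rule of_real_hom.mat_hom_pow[OF A, symmetric])
    finally have "(C ^\<^sub>m k) $$ (i,j) = complex_of_real ((1/s)^k * (A ^\<^sub>m k) $$ (i,j))"
      using that A by simp
    moreover have "norm ((C ^\<^sub>m k) $$ (i,j)) \<le> c" using c that C unfolding norm_bound_def by simp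
    ultimately have "\<bar>(1/s)^k * (A ^\<^sub>m k) $$ (i,j)\<bar> \<le> c" by (metis norm_of_real)
    hence "(1/s)^k * (A ^\<^sub>m k) $$ (i,j) \<le> c" by linarith
    thus ?thesis using s by (simp add: field_simps)
  qed
  define f where "f i k = (\<Sum>j<n. (A ^\<^sub>m k)$$(i,j)) / r^k" for i k
  have fnn: "f i k \<ge> 0" if "i<n" for i k unfolding f_def using Pnn that r by (intro divide_nonneg_pos sum_nonneg) auto
  have fsum: "summable (f i)" if i: "i<n" for i
  proof (rule summable_comparison_test)
    show "\<exists>N. \<forall>k\<ge>N. norm (f i k) \<le> real n * c * (s/r)^k"
    proof (intro exI allI impI)
      fix k
      have "norm (f i k) = (\<Sum>j<n. (A ^\<^sub>m k)$$(i,j)) / r^k" using fnn[OF i, of k] unfolding f_def by (simp only: real_norm_def abs_of_nonneg)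
      also have "\<dots> \<le> (\<Sum>j<n. c * s^k) / r^k" using Abound i r by (intro divide_right_mono sum_mono) auto
      also have "\<dots> = real n * c * (s/r)^k" by (simp add: power_divide)
      finally show "norm (f i k) \<le> real n * c * (s/r)^k" .
    qed
    show "summable (\<lambda>k. real n * c * (s/r)^k)" using s r by (intro summable_mult summable_geometric) auto
  qed
  define u where "u i = suminf (f i)" for i
  have f0: "f i 0 = 1" if "i<n" for i
  proof -
    have "(\<Sum>j<n. (A ^\<^sub>m 0)$$(i,j)) = (\<Sum>j<n. if i = j then 1 else 0)" using A that by (intro sum.cong) auto
    thus ?thesis using that unfolding f_def by simp
  qed
  have usplit: "u i = 1 + (\<Sum>k. f i (Suc k))" if "i<n" for i
    using suminf_split_head[OF fsum[OF that]] f0[OF that] unfolding u_def by simp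
  have tailnn: "(\<Sum>k. f i (Suc k)) \<ge> 0" if "i<n" for i
    using fsum[OF that] fnn[OF that] by (intro suminf_nonneg) (auto simp: summable_Suc_iff)
  have key: "(\<Sum>j<n. A$$(i,j) * u j) = r * (\<Sum>k. f i (Suc k))" if i: "i<n" for i
  proof -
    have "(\<Sum>j<n. A$$(i,j) * u j) = (\<Sum>j<n. (\<Sum>k. A$$(i,j) * f j k))"
      unfolding u_def by (intro sum.cong refl suminf_mult[symmetric] fsum) auto
    also have "\<dots> = (\<Sum>k. (\<Sum>j<n. A$$(i,j) * f j k))"
      by (intro suminf_sum[symmetric] summable_mult fsum) auto
    also have "\<dots> = (\<Sum>k. r * f i (Suc k))"
    proof (intro suminf_cong)
      fix k
      have "(\<Sum>j<n. A$$(i,j) * f j k) = (\<Sum>j<n. (\<Sum>l<n. A$$(i,j) * (A ^\<^sub>m k)$$(j,l))) / r^k"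
        unfolding f_def by (simp add: sum_divide_distrib sum_distrib_left)
      also have "\<dots> = (\<Sum>l<n. (\<Sum>j<n. A$$(i,j) * (A ^\<^sub>m k)$$(j,l))) / r^k"
        by (subst sum.swap) simp
      also have "\<dots> = (\<Sum>l<n. (A ^\<^sub>m Suc k)$$(i,l)) / r^k"
        unfolding pow_Suc_left[OF A] using mult_entry[OF A pow_carrier_mat[OF A] i] by simp
      also have "\<dots> = r * f i (Suc k)" unfolding f_def using r by (simp add: field_simps)
      finally show "(\<Sum>j<n. A$$(i,j) * f j k) = r * f i (Suc k)" .
    qed
    also have "\<dots> = r * (\<Sum>k. f i (Suc k))"
      by (intro suminf_mult) (use fsum[OF i] in \<open>simp add: summable_Suc_iff\<close>)
    finally show ?thesis .
  qed
  show ?thesis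
  proof (intro exI conjI allI impI)
    fix i assume i: "i<n"
    show "u i > 0" using usplit[OF i] tailnn[OF i] by simp
    show "(\<Sum>j<n. A$$(i,j) * u j) < r * u i" using key[OF i] usplit[OF i] r by (simp add: algebra_simps)
  qed
qed


lemma schur_L1:
  fixes M S :: "real mat"
  assumes nn: "\<forall>i<Suc n. \<forall>j<Suc n. M$$(i,j) \<ge> 0"
    and d: "M$$(n,n) < 1"
    and Seq: "\<forall>i<n. \<forall>j<n. S$$(i,j) = M$$(i,j) + M$$(i,n) * M$$(n,j) / (1 - M$$(n,n))"
    and r: "r \<ge> 1"
    and upos: "\<forall>i<Suc n. u i > 0"
    and ub: "\<forall>i<Suc n. (\<Sum>j<Suc n. M$$(i,j) * u j) < r * u i"
  shows "\<forall>i<n. (\<Sum>j<n. S$$(i,j) * u j) < ((r - M$$(n,n)) / (1 - M$$(n,n))) * r * u i"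
proof (intro allI impI)
  fix i assume i: "i < n"
  define dd where "dd = M$$(n,n)"
  define D where "D = 1 - dd"
  define \<kappa> where "\<kappa> = (r - dd) / D"
  have D: "D > 0" using d unfolding D_def dd_def by simp
  have \<kappa>1: "\<kappa> \<ge> 1" using r D unfolding \<kappa>_def D_def by (simp add: field_simps)
  define cn where "cn = (\<Sum>j<n. M$$(n,j) * u j)"
  define a where "a = (\<Sum>j<n. M$$(i,j) * u j)"
  have a0: "a \<ge> 0" unfolding a_def using nn upos i by (intro sum_nonneg mult_nonneg_nonneg) (auto simp: less_imp_le)
  have min0: "M$$(i,n) \<ge> 0" using nn i by auto
  have "cn + dd * u n < r * u n" using ub[rule_format, of n] unfolding cn_def dd_def by simp
  hence "cn < (r - dd) * u n" by (simp add: algebra_simps)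
  hence cnb: "cn / D \<le> \<kappa> * u n" unfolding \<kappa>_def using D by (simp add: field_simps)
  have "(\<Sum>j<n. S$$(i,j) * u j) = a + M$$(i,n) * (cn / D)"
    unfolding a_def cn_def D_def dd_def using Seq i
    by (simp add: algebra_simps sum.distrib sum_distrib_left sum_divide_distrib)
  also have "\<dots> \<le> a + M$$(i,n) * (\<kappa> * u n)" using mult_left_mono[OF cnb min0] by simp
  also have "\<dots> \<le> \<kappa> * (a + M$$(i,n) * u n)"
  proof -
    have "a \<le> \<kappa> * a" using a0 \<kappa>1 mult_right_mono[of 1 \<kappa> a] by simp
    thus ?thesis by (simp add: distrib_left)
  qed
  also have "\<dots> < \<kappa> * (r * u i)"
  proof -
    have "a + M$$(i,n) * u n < r * u i" using ub[rule_format, of i] i unfolding a_def by simp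
    thus ?thesis using \<kappa>1 by simp
  qed
  finally show "(\<Sum>j<n. S$$(i,j) * u j) < ((r - M$$(n,n)) / (1 - M$$(n,n))) * r * u i"
    unfolding \<kappa>_def D_def dd_def by simp
qed


lemma schur_L2:
  fixes M S :: "real mat"
  assumes n: "n > 0" and nn: "\<forall>i<Suc n. \<forall>j<Suc n. M$$(i,j) \<ge> 0"
    and d: "M$$(n,n) < 1"
    and Seq: "\<forall>i<n. \<forall>j<n. S$$(i,j) = M$$(i,j) + M$$(i,n) * M$$(n,j) / (1 - M$$(n,n))"
    and sr: "1 \<le> s" "s \<le> r"
    and upos: "\<forall>i<n. u i > 0"
    and ub: "\<forall>i<n. (\<Sum>j<n. S$$(i,j) * u j) < s * u i"
  shows "\<exists>v. (\<forall>i<Suc n. v i > 0) \<and> (\<forall>i<Suc n. (\<Sum>j<Suc n. M$$(i,j) * v j) < r * v i)"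
proof -
  define dd where "dd = M$$(n,n)"
  define D where "D = 1 - dd"
  have D: "D > 0" using d unfolding D_def dd_def by simp
  define cn where "cn = (\<Sum>j<n. M$$(n,j) * u j)"
  have cn0: "cn \<ge> 0" unfolding cn_def using nn upos by (intro sum_nonneg mult_nonneg_nonneg) (auto simp: less_imp_le)
  define gap where "gap i = s * u i - (\<Sum>j<n. S$$(i,j) * u j)" for i
  have gap: "gap i > 0" if "i<n" for i using ub that unfolding gap_def by auto
  define eps where "eps = Min ((\<lambda>i. gap i / (M$$(i,n) + 1)) ` {..<n})"
  have Min0: "M$$(i,n) \<ge> 0" if "i<n" for i using nn that by auto
  have eps0: "eps > 0" unfolding eps_def using n gap Min0
    by (subst Min_gr_iff) (auto intro!: divide_pos_pos add_nonneg_pos)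
  have epsb: "M$$(i,n) * eps < gap i" if i: "i<n" for i
  proof -
    have "eps \<le> gap i / (M$$(i,n) + 1)" unfolding eps_def using i by (intro Min_le) auto
    hence "(M$$(i,n) + 1) * eps \<le> gap i" using Min0[OF i] by (simp add: field_simps)
    thus ?thesis using eps0 by (simp add: algebra_simps)
  qed
  define un where "un = cn / D + eps"
  define v where "v j = (if j < n then u j else un)" for j
  have un0: "un > 0" unfolding un_def using cn0 D eps0 by (simp add: add_nonneg_pos)
  show ?thesis
  proof (intro exI conjI allI impI)
    fix i assume i: "i < Suc n"
    show "v i > 0" using i upos un0 unfolding v_def by auto
    have sumsplit: "(\<Sum>j<Suc n. M$$(i,j) * v j) = (\<Sum>j<n. M$$(i,j) * u j) + M$$(i,n) * un"
      unfolding v_def by simp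
    show "(\<Sum>j<Suc n. M$$(i,j) * v j) < r * v i"
    proof (cases "i = n")
      case True
      have "cn + dd * un = un - D * eps" unfolding un_def D_def using D unfolding D_def
        by (simp add: field_simps)
      also have "\<dots> < un" using D eps0 by simp
      also have "\<dots> \<le> r * un" using un0 sr by simp
      finally show ?thesis using True sumsplit unfolding cn_def dd_def v_def by simp
    next
      case False
      hence i': "i < n" using i by simp
      have "(\<Sum>j<n. S$$(i,j) * u j) = (\<Sum>j<n. M$$(i,j) * u j) + M$$(i,n) * (cn / D)"
        unfolding cn_def D_def dd_def using Seq i'
        by (simp add: algebra_simps sum.distrib sum_distrib_left sum_divide_distrib)
      hence "(\<Sum>j<Suc n. M$$(i,j) * v j) = (\<Sum>j<n. S$$(i,j) * u j) + M$$(i,n) * eps"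
        unfolding sumsplit un_def by (simp add: algebra_simps)
      also have "\<dots> < s * u i" using epsb[OF i'] unfolding gap_def by simp
      also have "\<dots> \<le> r * u i" using sr upos i' by (simp add: mult_right_mono)
      finally show ?thesis unfolding v_def using i' by simp
    qed
  qed
qed


lemma schur_perron:
  fixes M S :: "real mat"
  assumes M: "M \<in> carrier_mat (Suc n) (Suc n)" and S: "S \<in> carrier_mat n n" and n: "n>0"
    and nn: "\<forall>i<Suc n. \<forall>j<Suc n. M$$(i,j) \<ge> 0"
    and d: "M$$(n,n) < 1"
    and Seq: "\<forall>i<n. \<forall>j<n. S$$(i,j) = M$$(i,j) + M$$(i,n) * M$$(n,j) / (1 - M$$(n,n))"
  shows "(perron_root S < 1 \<longleftrightarrow> perron_root M < 1) \<and> (perron_root S \<le> 1 \<longleftrightarrow> perron_root M \<le> 1)"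
proof -
  define dd where "dd = M$$(n,n)"
  have Snn: "\<forall>i<n. \<forall>j<n. S$$(i,j) \<ge> 0" using Seq nn d
    by (auto intro!: add_nonneg_nonneg divide_nonneg_pos mult_nonneg_nonneg)
  have Mlt: "perron_root S < ((r - dd)/(1-dd)) * r" if h: "perron_root M < r" "r \<ge> 1" for r
  proof -
    obtain u where u: "\<forall>i<Suc n. u i > 0" "\<forall>i<Suc n. (\<Sum>j<Suc n. M$$(i,j) * u j) < r * u i"
      using crit_ex[OF M _ nn _ h(1)] h(2) by auto
    note b = schur_L1[OF nn d Seq h(2) u]
    have "(r - dd)/(1-dd) * r > 0" using h(2) d unfolding dd_def by (simp add: field_simps)
    then show ?thesis using crit_lt[OF S n Snn _ _ b] u unfolding dd_def by auto
  qed
  have Slt: "perron_root M < r" if h: "perron_root S < s" "1 \<le> s" "s \<le> r" for s r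
  proof -
    obtain u where u: "\<forall>i<n. u i > 0" "\<forall>i<n. (\<Sum>j<n. S$$(i,j) * u j) < s * u i"
      using crit_ex[OF S n Snn _ h(1)] h(2) by auto
    obtain v where v: "\<forall>i<Suc n. v i > 0" "\<forall>i<Suc n. (\<Sum>j<Suc n. M$$(i,j) * v j) < r * v i"
      using schur_L2[OF n nn d Seq h(2,3) u] by auto
    show ?thesis using crit_lt[OF M _ nn _ v] h by auto
  qed
  have 1: "perron_root S < 1 \<longleftrightarrow> perron_root M < 1"
  proof
    assume "perron_root S < 1" thus "perron_root M < 1" using Slt[of 1 1] by simp
  next
    assume "perron_root M < 1" thus "perron_root S < 1" using Mlt[of 1] d unfolding dd_def by simp
  qed
  have 2: "perron_root S \<le> 1 \<longleftrightarrow> perron_root M \<le> 1"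
  proof
    assume a: "perron_root S \<le> 1"
    show "perron_root M \<le> 1"
    proof (rule ccontr)
      assume "\<not> perron_root M \<le> 1"
      define r where "r = (perron_root M + 1) / 2"
      have "perron_root S < (1 + r)/2" "1 \<le> (1 + r)/2" "(1 + r)/2 \<le> r"
        using a \<open>\<not> perron_root M \<le> 1\<close> unfolding r_def by (auto simp: field_simps)
      hence "perron_root M < r" by (rule Slt)
      thus False unfolding r_def using \<open>\<not> perron_root M \<le> 1\<close> by simp
    qed
  next
    assume a: "perron_root M \<le> 1"
    define g where "g r = ((r - dd)/(1-dd)) * r" for r
    have lim: "(g \<longlongrightarrow> ((1 - dd)/(1-dd)) * 1) (at_right 1)" unfolding g_def
      by (intro tendsto_intros) (use d in \<open>auto simp: dd_def\<close>)
    hence lim': "(g \<longlongrightarrow> 1) (at_right 1)" using d unfolding dd_def by simp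
    have "eventually (\<lambda>r. r > 1) (at_right (1::real))" by (simp add: eventually_at_right_less)
    hence ev: "eventually (\<lambda>r. perron_root S \<le> g r) (at_right (1::real))"
    proof (rule eventually_mono)
      fix r :: real assume "r > 1"
      hence "perron_root M < r" using a by simp
      from Mlt[OF this] \<open>r > 1\<close> show "perron_root S \<le> g r" unfolding g_def by simp
    qed
    show "perron_root S \<le> 1"
      by (rule tendsto_le[OF trivial_limit_at_right_real lim' tendsto_const ev])
  qed
  show ?thesis using 1 2 by blast
qed



definition gq :: "('s \<Rightarrow> 's \<Rightarrow> real) \<Rightarrow> real \<Rightarrow> 's \<Rightarrow> real" where
  "gq q lam z = (- q z z) / (lam - q z z)"

fun pw :: "('s \<Rightarrow> 's \<Rightarrow> real) \<Rightarrow> real \<Rightarrow> 's \<Rightarrow> 's list \<Rightarrow> 's \<Rightarrow> real" where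
  "pw q lam u [] v = jump_prob q u v"
| "pw q lam u (z # zs) v = jump_prob q u z * gq q lam z * pw q lam z zs v"

definition Lst :: "'s set \<Rightarrow> 's list set" where
  "Lst A = {zs. \<forall>z\<in>set zs. z \<notin> A}"

definition Fe :: "('s \<Rightarrow> 's \<Rightarrow> real) \<Rightarrow> real \<Rightarrow> 's \<Rightarrow> 's set \<Rightarrow> 's \<Rightarrow> ennreal" where
  "Fe q lam u A v = (\<integral>\<^sup>+ zs. ennreal (pw q lam u zs v) \<partial>count_space (Lst A))"

lemma path_weight_pw: "path_weight q u zs v lam = pw q lam u zs v"
proof (induct zs arbitrary: u)
  case Nil
  show ?case by (simp add: path_weight_def)
next
  case (Cons z zs)
  let ?p = "u # (z # zs) @ [v]"
  let ?p' = "z # zs @ [v]"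
  let ?G = "\<lambda>z. (- q z z) / (lam - q z z)"
  have e1: "(\<Prod>i<length ?p - 1. jump_prob q (?p ! i) (?p ! Suc i))
      = jump_prob q u z * (\<Prod>i<length ?p' - 1. jump_prob q (?p' ! i) (?p' ! Suc i))"
  proof -
    have "length ?p - 1 = Suc (length ?p' - 1)" by simp
    thus ?thesis by (simp only: prod.lessThan_Suc_shift nth_Cons_Suc nth_Cons_0 append_Cons)
  qed
  have e2: "path_weight q u (z # zs) v lam = (\<Prod>i<length ?p - 1. jump_prob q (?p ! i) (?p ! Suc i)) *
       (\<Prod>z\<leftarrow>z # zs. ?G z)" by (simp only: path_weight_def Let_def)
  have e3: "path_weight q z zs v lam = (\<Prod>i<length ?p' - 1. jump_prob q (?p' ! i) (?p' ! Suc i)) *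
       (\<Prod>z\<leftarrow>zs. ?G z)" by (simp only: path_weight_def Let_def)
  have e4: "(\<Prod>z\<leftarrow>z # zs. ?G z) = ?G z * (\<Prod>z\<leftarrow>zs. ?G z)" by simp
  show ?case unfolding e2 e1 e4 pw.simps Cons[of z, symmetric] e3 gq_def by (simp only: mult_ac)
qed

lemma taboo_Fe: "taboo_Fstar q H u v lam = enn2real (Fe q lam u (insert v H) v)"
proof -
  have "{zs. \<forall>z\<in>set zs. z \<notin> H \<and> z \<noteq> v} = {zs. \<forall>z\<in>set zs. z \<notin> insert v H}" by auto
  thus ?thesis unfolding taboo_Fstar_def Fe_def Lst_def path_weight_pw by simp
qed

lemma pw_append: "pw q lam u (as @ z # bs) v = pw q lam u as z * gq q lam z * pw q lam z bs v"
  by (induct as arbitrary: u) (auto simp: algebra_simps)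

lemma cq_props:
  assumes "conservative_Q q"
  shows "\<And>a b. a \<noteq> b \<Longrightarrow> q a b \<ge> 0" "\<And>a. q a a < 0"
  using assms unfolding conservative_Q_def by auto

lemma jump_nonneg: assumes "conservative_Q q" shows "jump_prob q a b \<ge> 0"
proof (cases "a = b")
  case True thus ?thesis by (simp add: jump_prob_def)
next
  case False
  have "q a b / (- q a a) \<ge> 0" using cq_props[OF assms] False by (intro divide_nonneg_pos) auto
  thus ?thesis using False unfolding jump_prob_def by (simp only: if_False)
qed

lemma gq_props: assumes "conservative_Q q" "lam \<ge> 0"
  shows "gq q lam z > 0" "gq q lam z \<le> 1" "lam > 0 \<Longrightarrow> gq q lam z < 1"
  using cq_props(2)[OF assms(1), of z] assms(2) unfolding gq_def
  by (auto simp: divide_simps)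

lemma pw_nonneg: assumes "conservative_Q q" "lam \<ge> 0" shows "pw q lam u zs v \<ge> 0"
  by (induct zs arbitrary: u)
     (auto intro!: mult_nonneg_nonneg simp: jump_nonneg[OF assms(1)] less_imp_le[OF gq_props(1)[OF assms]])


lemma nn_integral_image_prod:
  fixes F :: "'a \<Rightarrow> 'b \<Rightarrow> 'c" and h :: "'c \<Rightarrow> ennreal"
  assumes inj: "inj_on (\<lambda>(a,b). F a b) (X \<times> Y)"
  shows "(\<integral>\<^sup>+ w. h w \<partial>count_space ((\<lambda>(a,b). F a b) ` (X \<times> Y)))
       = (\<integral>\<^sup>+ a. (\<integral>\<^sup>+ b. h (F a b) \<partial>count_space Y) \<partial>count_space X)"
proof -
  have "(\<integral>\<^sup>+ w. h w \<partial>count_space ((\<lambda>(a,b). F a b) ` (X \<times> Y)))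
      = (\<integral>\<^sup>+ p. h ((\<lambda>(a,b). F a b) p) \<partial>count_space (X \<times> Y))"
    by (rule nn_integral_bij_count_space[symmetric]) (use inj in \<open>simp add: inj_on_imp_bij_betw\<close>)
  also have "\<dots> = (\<integral>\<^sup>+ p. h ((\<lambda>(a,b). F a b) p) * indicator (X \<times> Y) p \<partial>count_space UNIV)"
    by (simp add: nn_integral_count_space_indicator)
  also have "\<dots> = (\<integral>\<^sup>+ a. \<integral>\<^sup>+ b. h (F a b) * indicator (X \<times> Y) (a,b) \<partial>count_space UNIV \<partial>count_space UNIV)"
    by (subst nn_integral_fst_count_space[symmetric]) simp
  also have "\<dots> = (\<integral>\<^sup>+ a. (\<integral>\<^sup>+ b. h (F a b) * indicator Y b \<partial>count_space UNIV) * indicator X a \<partial>count_space UNIV)"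
  proof (intro nn_integral_cong)
    fix a
    show "(\<integral>\<^sup>+ b. h (F a b) * indicator (X \<times> Y) (a,b) \<partial>count_space UNIV)
        = (\<integral>\<^sup>+ b. h (F a b) * indicator Y b \<partial>count_space UNIV) * indicator X a"
      by (cases "a \<in> X") (auto simp: indicator_def)
  qed
  also have "\<dots> = (\<integral>\<^sup>+ a. (\<integral>\<^sup>+ b. h (F a b) \<partial>count_space Y) \<partial>count_space X)"
    by (simp add: nn_integral_count_space_indicator)
  finally show ?thesis .
qed

lemma nn_integral_count_space_Un:
  fixes h :: "'c \<Rightarrow> ennreal"
  assumes "S \<inter> T = {}"
  shows "(\<integral>\<^sup>+ w. h w \<partial>count_space (S \<union> T)) = (\<integral>\<^sup>+ w. h w \<partial>count_space S) + (\<integral>\<^sup>+ w. h w \<partial>count_space T)"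
proof -
  have "(\<integral>\<^sup>+ w. h w \<partial>count_space (S \<union> T)) = (\<integral>\<^sup>+ w. h w * indicator S w + h w * indicator T w \<partial>count_space UNIV)"
    using assms by (subst nn_integral_count_space_indicator) (auto intro!: nn_integral_cong simp: indicator_def)
  also have "\<dots> = (\<integral>\<^sup>+ w. h w * indicator S w \<partial>count_space UNIV) + (\<integral>\<^sup>+ w. h w * indicator T w \<partial>count_space UNIV)"
    by (rule nn_integral_add) auto
  finally show ?thesis by (simp add: nn_integral_count_space_indicator)
qed

lemma app_first_unique:
  "z \<notin> set a \<Longrightarrow> z \<notin> set c \<Longrightarrow> a @ z # b = c @ z # d \<Longrightarrow> a = c \<and> b = d"
proof (induct a arbitrary: c)
  case Nil thus ?case by (cases c) auto
next
  case (Cons x a) thus ?case by (cases c) auto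
qed

lemma Lst_decomp:
  assumes "z \<notin> A"
  shows "Lst A = Lst (insert z A) \<union> (\<lambda>(as,bs). as @ z # bs) ` (Lst (insert z A) \<times> Lst A)"
    and "Lst (insert z A) \<inter> (\<lambda>(as,bs). as @ z # bs) ` (Lst (insert z A) \<times> Lst A) = {}"
    and "inj_on (\<lambda>(as,bs). as @ z # bs) (Lst (insert z A) \<times> Lst A)"
proof -
  show "Lst A = Lst (insert z A) \<union> (\<lambda>(as,bs). as @ z # bs) ` (Lst (insert z A) \<times> Lst A)"
  proof (intro equalityI subsetI)
    fix zs assume zs: "zs \<in> Lst A"
    show "zs \<in> Lst (insert z A) \<union> (\<lambda>(as,bs). as @ z # bs) ` (Lst (insert z A) \<times> Lst A)"
    proof (cases "z \<in> set zs")
      case True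
      then obtain as bs where "zs = as @ z # bs" "z \<notin> set as" using split_list_first by metis
      thus ?thesis using zs unfolding Lst_def by (auto intro!: image_eqI[where x = "(as, bs)"])
    next
      case False thus ?thesis using zs unfolding Lst_def by auto
    qed
  next
    fix zs assume "zs \<in> Lst (insert z A) \<union> (\<lambda>(as,bs). as @ z # bs) ` (Lst (insert z A) \<times> Lst A)"
    thus "zs \<in> Lst A" using assms unfolding Lst_def by auto
  qed
  show "Lst (insert z A) \<inter> (\<lambda>(as,bs). as @ z # bs) ` (Lst (insert z A) \<times> Lst A) = {}"
    unfolding Lst_def by auto
  show "inj_on (\<lambda>(as,bs). as @ z # bs) (Lst (insert z A) \<times> Lst A)"
    proof (rule inj_onI)
    fix p p' assume h: "p \<in> Lst (insert z A) \<times> Lst A" "p' \<in> Lst (insert z A) \<times> Lst A"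
      "(\<lambda>(as,bs). as @ z # bs) p = (\<lambda>(as,bs). as @ z # bs) p'"
    obtain a b c d where pp: "p = (a,b)" "p' = (c,d)" by (cases p, cases p')
    have "z \<notin> set a" "z \<notin> set c" using h(1,2) unfolding pp Lst_def by auto
    from app_first_unique[OF this] h(3) show "p = p'" unfolding pp by auto
  qed
qed

lemma Fe_decomp:
  assumes cq: "conservative_Q q" and lam: "lam \<ge> 0" and z: "z \<notin> A"
  shows "Fe q lam u A v = Fe q lam u (insert z A) v + Fe q lam u (insert z A) z * ennreal (gq q lam z) * Fe q lam z A v"
proof -
  note d = Lst_decomp[OF z]
  have "Fe q lam u A v = Fe q lam u (insert z A) v +
     (\<integral>\<^sup>+ w. ennreal (pw q lam u w v) \<partial>count_space ((\<lambda>(as,bs). as @ z # bs) ` (Lst (insert z A) \<times> Lst A)))"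
    unfolding Fe_def by (subst d(1)) (rule nn_integral_count_space_Un[OF d(2)])
  also have "(\<integral>\<^sup>+ w. ennreal (pw q lam u w v) \<partial>count_space ((\<lambda>(as,bs). as @ z # bs) ` (Lst (insert z A) \<times> Lst A)))
     = (\<integral>\<^sup>+ as. (\<integral>\<^sup>+ bs. ennreal (pw q lam u (as @ z # bs) v) \<partial>count_space (Lst A)) \<partial>count_space (Lst (insert z A)))"
    by (rule nn_integral_image_prod[OF d(3)])
  also have "\<dots> = (\<integral>\<^sup>+ as. ennreal (pw q lam u as z) * (ennreal (gq q lam z) * Fe q lam z A v) \<partial>count_space (Lst (insert z A)))"
  proof (intro nn_integral_cong)
    fix as
    have "(\<integral>\<^sup>+ bs. ennreal (pw q lam u (as @ z # bs) v) \<partial>count_space (Lst A))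
        = (\<integral>\<^sup>+ bs. (ennreal (pw q lam u as z) * ennreal (gq q lam z)) * ennreal (pw q lam z bs v) \<partial>count_space (Lst A))"
      unfolding pw_append using pw_nonneg[OF cq lam] gq_props[OF cq lam]
      by (intro nn_integral_cong) (simp add: ennreal_mult less_imp_le)
    also have "\<dots> = ennreal (pw q lam u as z) * (ennreal (gq q lam z) * Fe q lam z A v)"
      unfolding Fe_def by (subst nn_integral_cmult) (auto simp: mult.assoc)
    finally show "(\<integral>\<^sup>+ bs. ennreal (pw q lam u (as @ z # bs) v) \<partial>count_space (Lst A))
        = ennreal (pw q lam u as z) * (ennreal (gq q lam z) * Fe q lam z A v)" .
  qed
  also have "\<dots> = Fe q lam u (insert z A) z * (ennreal (gq q lam z) * Fe q lam z A v)"
    unfolding Fe_def by (subst nn_integral_multc) auto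
  finally show ?thesis by (simp add: mult.assoc)
qed


lemma nn_integral_count_space_mono_set:
  fixes h :: "'c \<Rightarrow> ennreal"
  assumes "S \<subseteq> T"
  shows "(\<integral>\<^sup>+ w. h w \<partial>count_space S) \<le> (\<integral>\<^sup>+ w. h w \<partial>count_space T)"
proof -
  have "(\<integral>\<^sup>+ w. h w * indicator S w \<partial>count_space UNIV) \<le> (\<integral>\<^sup>+ w. h w * indicator T w \<partial>count_space UNIV)"
    using assms by (intro nn_integral_mono) (auto simp: indicator_def)
  thus ?thesis by (simp add: nn_integral_count_space_indicator)
qed

lemma jump_sum:
  assumes cq: "conservative_Q q"
  shows "(\<integral>\<^sup>+ y. ennreal (jump_prob q u y) \<partial>count_space UNIV) = 1"
proof -
  let ?f = "\<lambda>y. q u y"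
  have h0: "(?f has_sum 0) UNIV" using cq unfolding conservative_Q_def by auto
  have sm: "?f summable_on (UNIV - {u})"
  proof -
    have "?f summable_on UNIV" using h0 unfolding summable_on_def by blast
    thus ?thesis by (rule summable_on_subset_banach) simp
  qed
  have "(?f has_sum (?f u + infsum ?f (UNIV - {u}))) (insert u (UNIV - {u}))"
    by (rule has_sum_insert) (simp, rule has_sum_infsum[OF sm])
  hence "?f u + infsum ?f (UNIV - {u}) = 0" using h0 has_sum_unique by (metis insert_Diff_single insert_UNIV)
  hence "infsum ?f (UNIV - {u}) = - q u u" by simp
  hence h1: "(?f has_sum (- q u u)) (UNIV - {u})" using sm has_sum_infsum by metis
  have qn: "q u u < 0" using cq_props(2)[OF cq] .
  have h2: "(jump_prob q u has_sum 1) (UNIV - {u})"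
  proof -
    have "((\<lambda>y. q u y / (- q u u)) has_sum (- q u u) / (- q u u)) (UNIV - {u})"
      by (rule has_sum_divide_const[OF h1])
    hence "((\<lambda>y. q u y / (- q u u)) has_sum 1) (UNIV - {u})" using qn by simp
    thus ?thesis by (rule iffD1[OF has_sum_cong, rotated]) (auto simp: jump_prob_def)
  qed
  have h3: "(jump_prob q u has_sum 1) UNIV"
  proof -
    have "(jump_prob q u has_sum (jump_prob q u u + 1)) (insert u (UNIV - {u}))"
      by (rule has_sum_insert[OF _ h2]) simp
    thus ?thesis by (simp add: jump_prob_def insert_UNIV)
  qed
  have nn: "\<And>y. jump_prob q u y \<ge> 0" using jump_nonneg[OF cq] .
  have nrm: "(\<lambda>y. norm (jump_prob q u y)) = jump_prob q u" using nn by (auto simp: fun_eq_iff)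
  have "Infinite_Sum.abs_summable_on (jump_prob q u) UNIV"
    unfolding nrm summable_on_def using h3 by blast
  hence as: "Infinite_Set_Sum.abs_summable_on (jump_prob q u) UNIV" using abs_summable_equivalent by blast
  have "(\<integral>\<^sup>+ y. ennreal (jump_prob q u y) \<partial>count_space UNIV) = ennreal (infsetsum (jump_prob q u) UNIV)"
    by (rule nn_integral_conv_infsetsum[OF as nn])
  also have "infsetsum (jump_prob q u) UNIV = infsum (jump_prob q u) UNIV" by (rule infsetsum_infsum[OF as])
  also have "\<dots> = 1" using h3 by (rule infsumI)
  finally show ?thesis by simp
qed


definition Lstn :: "'s set \<Rightarrow> nat \<Rightarrow> 's list set" where
  "Lstn A n = {zs \<in> Lst A. length zs < n}"

definition Fn :: "('s \<Rightarrow> 's \<Rightarrow> real) \<Rightarrow> real \<Rightarrow> 's \<Rightarrow> 's set \<Rightarrow> 's \<Rightarrow> nat \<Rightarrow> ennreal" where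
  "Fn q lam u A v n = (\<integral>\<^sup>+ zs. ennreal (pw q lam u zs v) \<partial>count_space (Lstn A n))"

lemma Lstn_Suc:
  "Lstn A (Suc n) = {[]} \<union> (\<lambda>(y,ys). y # ys) ` ((-A) \<times> Lstn A n)"
proof (intro equalityI subsetI)
  fix zs assume zs: "zs \<in> Lstn A (Suc n)"
  show "zs \<in> {[]} \<union> (\<lambda>(y,ys). y # ys) ` ((-A) \<times> Lstn A n)"
  proof (cases zs)
    case Nil thus ?thesis by simp
  next
    case (Cons y ys) thus ?thesis using zs unfolding Lstn_def Lst_def
      by (auto intro!: image_eqI[where x = "(y, ys)"])
  qed
next
  fix zs assume "zs \<in> {[]} \<union> (\<lambda>(y,ys). y # ys) ` ((-A) \<times> Lstn A n)"
  thus "zs \<in> Lstn A (Suc n)" unfolding Lstn_def Lst_def by auto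
qed

lemma Fn_Suc:
  assumes cq: "conservative_Q q" and lam: "lam \<ge> 0"
  shows "Fn q lam u A v (Suc n) = ennreal (jump_prob q u v) +
    (\<integral>\<^sup>+ y. ennreal (jump_prob q u y * gq q lam y) * Fn q lam y A v n \<partial>count_space (-A))"
proof -
  have inj: "inj_on (\<lambda>(y,ys). y # ys) ((-A) \<times> Lstn A n)" by (auto simp: inj_on_def)
  have "Fn q lam u A v (Suc n) = (\<integral>\<^sup>+ zs. ennreal (pw q lam u zs v) \<partial>count_space {[]}) +
     (\<integral>\<^sup>+ zs. ennreal (pw q lam u zs v) \<partial>count_space ((\<lambda>(y,ys). y # ys) ` ((-A) \<times> Lstn A n)))"
    unfolding Fn_def Lstn_Suc by (rule nn_integral_count_space_Un) auto
  also have "(\<integral>\<^sup>+ zs. ennreal (pw q lam u zs v) \<partial>count_space {[]}) = ennreal (jump_prob q u v)"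
    by (subst nn_integral_count_space_finite) auto
  also have "(\<integral>\<^sup>+ zs. ennreal (pw q lam u zs v) \<partial>count_space ((\<lambda>(y,ys). y # ys) ` ((-A) \<times> Lstn A n)))
     = (\<integral>\<^sup>+ y. (\<integral>\<^sup>+ ys. ennreal (pw q lam u (y # ys) v) \<partial>count_space (Lstn A n)) \<partial>count_space (-A))"
    by (rule nn_integral_image_prod[OF inj])
  also have "\<dots> = (\<integral>\<^sup>+ y. ennreal (jump_prob q u y * gq q lam y) * Fn q lam y A v n \<partial>count_space (-A))"
  proof (intro nn_integral_cong)
    fix y
    have "(\<integral>\<^sup>+ ys. ennreal (pw q lam u (y # ys) v) \<partial>count_space (Lstn A n))
      = (\<integral>\<^sup>+ ys. ennreal (jump_prob q u y * gq q lam y) * ennreal (pw q lam y ys v) \<partial>count_space (Lstn A n))"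
      using pw_nonneg[OF cq lam] gq_props[OF cq lam] jump_nonneg[OF cq]
      by (intro nn_integral_cong) (simp add: ennreal_mult less_imp_le)
    also have "\<dots> = ennreal (jump_prob q u y * gq q lam y) * Fn q lam y A v n"
      unfolding Fn_def by (subst nn_integral_cmult) auto
    finally show "(\<integral>\<^sup>+ ys. ennreal (pw q lam u (y # ys) v) \<partial>count_space (Lstn A n))
      = ennreal (jump_prob q u y * gq q lam y) * Fn q lam y A v n" .
  qed
  finally show ?thesis .
qed

lemma Fn_bound:
  assumes cq: "conservative_Q q" and lam: "lam \<ge> 0" and T: "finite T" "T \<subseteq> A"
  shows "(\<Sum>t\<in>T. Fn q lam u A t n) \<le> 1"
proof (induct n arbitrary: u)
  case 0
  have "Lstn A 0 = {}" unfolding Lstn_def by simp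
  thus ?case unfolding Fn_def by (simp add: nn_integral_count_space_finite)
next
  case (Suc n)
  let ?P = "\<lambda>y. ennreal (jump_prob q u y)"
  have "(\<Sum>t\<in>T. Fn q lam u A t (Suc n)) = (\<Sum>t\<in>T. ?P t) +
     (\<Sum>t\<in>T. \<integral>\<^sup>+ y. ennreal (jump_prob q u y * gq q lam y) * Fn q lam y A t n \<partial>count_space (-A))"
    unfolding Fn_Suc[OF cq lam] by (rule sum.distrib)
  also have "(\<Sum>t\<in>T. \<integral>\<^sup>+ y. ennreal (jump_prob q u y * gq q lam y) * Fn q lam y A t n \<partial>count_space (-A))
      = (\<integral>\<^sup>+ y. (\<Sum>t\<in>T. ennreal (jump_prob q u y * gq q lam y) * Fn q lam y A t n) \<partial>count_space (-A))"
    by (rule nn_integral_sum[symmetric]) auto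
  also have "\<dots> \<le> (\<integral>\<^sup>+ y. ?P y \<partial>count_space (-A))"
  proof (intro nn_integral_mono)
    fix y
    have "(\<Sum>t\<in>T. ennreal (jump_prob q u y * gq q lam y) * Fn q lam y A t n)
        = ennreal (jump_prob q u y * gq q lam y) * (\<Sum>t\<in>T. Fn q lam y A t n)"
      by (simp add: sum_distrib_left)
    also have "\<dots> \<le> ennreal (jump_prob q u y * gq q lam y) * 1"
      by (intro mult_left_mono Suc) auto
    also have "\<dots> \<le> ?P y"
      using gq_props[OF cq lam, of y] jump_nonneg[OF cq, of u y]
      by (simp add: ennreal_leI mult_left_le)
    finally show "(\<Sum>t\<in>T. ennreal (jump_prob q u y * gq q lam y) * Fn q lam y A t n) \<le> ?P y" .
  qed
  also have "(\<Sum>t\<in>T. ?P t) = (\<integral>\<^sup>+ y. ?P y \<partial>count_space T)"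
    by (rule nn_integral_count_space_finite[OF T(1), symmetric])
  finally have "(\<Sum>t\<in>T. Fn q lam u A t (Suc n)) \<le> (\<integral>\<^sup>+ y. ?P y \<partial>count_space T) + (\<integral>\<^sup>+ y. ?P y \<partial>count_space (-A))"
    by (simp add: add_left_mono)
  also have "\<dots> = (\<integral>\<^sup>+ y. ?P y \<partial>count_space (T \<union> -A))"
    by (rule nn_integral_count_space_Un[symmetric]) (use T in auto)
  also have "\<dots> \<le> (\<integral>\<^sup>+ y. ?P y \<partial>count_space UNIV)" by (rule nn_integral_count_space_mono_set) simp
  also have "\<dots> = 1" by (rule jump_sum[OF cq])
  finally show ?case .
qed

lemma Fe_SUP:
  shows "Fe q lam u A v = (SUP n. Fn q lam u A v n)" and "incseq (Fn q lam u A v)"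
proof -
  let ?f = "\<lambda>n zs. ennreal (pw q lam u zs v) * indicator (Lstn A n) zs"
  have inc: "incseq ?f"
    by (auto simp: incseq_def le_fun_def Lstn_def indicator_def)
  have "Fe q lam u A v = (\<integral>\<^sup>+ zs. ennreal (pw q lam u zs v) * indicator (Lst A) zs \<partial>count_space UNIV)"
    unfolding Fe_def by (simp add: nn_integral_count_space_indicator)
  also have "\<dots> = (\<integral>\<^sup>+ zs. (SUP n. ?f n zs) \<partial>count_space UNIV)"
  proof (intro nn_integral_cong)
    fix zs
    show "ennreal (pw q lam u zs v) * indicator (Lst A) zs = (SUP n. ?f n zs)"
    proof (rule antisym)
      have "?f (Suc (length zs)) zs = ennreal (pw q lam u zs v) * indicator (Lst A) zs"
        by (simp add: Lstn_def indicator_def)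
      thus "ennreal (pw q lam u zs v) * indicator (Lst A) zs \<le> (SUP n. ?f n zs)"
        by (metis SUP_upper UNIV_I)
      show "(SUP n. ?f n zs) \<le> ennreal (pw q lam u zs v) * indicator (Lst A) zs"
        by (rule SUP_least) (auto simp: Lstn_def indicator_def)
    qed
  qed
  also have "\<dots> = (SUP n. (\<integral>\<^sup>+ zs. ?f n zs \<partial>count_space UNIV))"
    by (rule nn_integral_monotone_convergence_SUP[OF inc]) auto
  also have "\<dots> = (SUP n. Fn q lam u A v n)"
    unfolding Fn_def by (simp add: nn_integral_count_space_indicator)
  finally show "Fe q lam u A v = (SUP n. Fn q lam u A v n)" .
  show "incseq (Fn q lam u A v)"
    unfolding incseq_def Fn_def by (auto intro!: nn_integral_count_space_mono_set simp: Lstn_def)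
qed

lemma Fe_bound:
  assumes cq: "conservative_Q q" and lam: "lam \<ge> 0" and T: "finite T" "T \<subseteq> A"
  shows "(\<Sum>t\<in>T. Fe q lam u A t) \<le> 1"
proof -
  have "(\<Sum>t\<in>T. Fe q lam u A t) = (\<Sum>t\<in>T. SUP n. Fn q lam u A t n)" by (intro sum.cong refl Fe_SUP(1))
  also have "\<dots> = (SUP n. \<Sum>t\<in>T. Fn q lam u A t n)"
    by (rule ennreal_SUP_sum[symmetric]) (rule Fe_SUP(2))
  also have "\<dots> \<le> 1" by (rule SUP_least) (rule Fn_bound[OF cq lam T])
  finally show ?thesis .
qed




lemma Fe_le1:
  assumes cq: "conservative_Q q" and lam: "lam \<ge> 0" and t: "t \<in> B"
  shows "Fe q lam u B t \<le> 1"
  using Fe_bound[OF cq lam, of "{t}" B u] t by simp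

lemma Fe_real:
  assumes cq: "conservative_Q q" and lam: "lam \<ge> 0" and t: "t \<in> B"
  shows "Fe q lam u B t = ennreal (enn2real (Fe q lam u B t))"
proof -
  have "Fe q lam u B t < \<infinity>" by (rule le_less_trans[OF Fe_le1[OF assms]]) simp
  thus ?thesis by simp
qed

lemma Fr_decomp:
  assumes cq: "conservative_Q q" and lam: "lam \<ge> 0" and z: "z \<notin> A" and v: "v \<in> A"
  shows "enn2real (Fe q lam u A v) = enn2real (Fe q lam u (insert z A) v)
     + enn2real (Fe q lam u (insert z A) z) * gq q lam z * enn2real (Fe q lam z A v)"
proof -
  define a where "a = enn2real (Fe q lam u (insert z A) v)"
  define b where "b = enn2real (Fe q lam u (insert z A) z)"
  define c where "c = enn2real (Fe q lam z A v)"
  define g where "g = gq q lam z"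
  have g0: "g \<ge> 0" using gq_props(1)[OF cq lam] unfolding g_def by (simp add: less_imp_le)
  have a0: "a \<ge> 0" "b \<ge> 0" "c \<ge> 0" unfolding a_def b_def c_def by auto
  have ea: "Fe q lam u (insert z A) v = ennreal a" unfolding a_def by (rule Fe_real[OF cq lam]) (use v in simp)
  have eb: "Fe q lam u (insert z A) z = ennreal b" unfolding b_def by (rule Fe_real[OF cq lam]) simp
  have ec: "Fe q lam z A v = ennreal c" unfolding c_def by (rule Fe_real[OF cq lam v])
  have "Fe q lam u A v = ennreal a + ennreal b * ennreal g * ennreal c"
    unfolding Fe_decomp[OF cq lam z, of u v] ea eb ec g_def ..
  also have "\<dots> = ennreal (a + b * g * c)" using a0 g0 by (simp add: ennreal_mult)
  finally have "enn2real (Fe q lam u A v) = enn2real (ennreal (a + b * g * c))" by (simp only:)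
  also have "\<dots> = a + b * g * c" using a0 g0 by (intro enn2real_ennreal) simp
  finally show ?thesis by (simp only: a_def b_def c_def g_def)
qed

lemma reach_path:
  assumes cq: "conservative_Q q" and lam: "lam \<ge> 0"
    and ab: "(a, b) \<in> {(c, d). c \<noteq> d \<and> q c d > 0}\<^sup>*" and b: "b \<in> V"
  shows "a \<in> V \<or> (\<exists>t\<in>V. \<exists>zs\<in>Lst V. pw q lam a zs t > 0)"
  using ab
proof (induct rule: converse_rtrancl_induct)
  case base thus ?case using b by simp
next
  case (step a c)
  from step(1) have ac: "a \<noteq> c" "q a c > 0" by auto
  have Pac: "jump_prob q a c > 0" using ac cq_props(2)[OF cq, of a] unfolding jump_prob_def
    by (simp add: divide_pos_neg)
  show ?case
  proof (cases "a \<in> V")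
    case True thus ?thesis by simp
  next
    case False
    show ?thesis
    proof (cases "c \<in> V")
      case True
      thus ?thesis using Pac by (intro disjI2 bexI[of _ c] bexI[of _ "[]"]) (auto simp: Lst_def)
    next
      case cV: False
      with step(3) obtain t zs where t: "t \<in> V" "zs \<in> Lst V" "pw q lam c zs t > 0" by auto
      have "pw q lam a (c # zs) t > 0" using Pac t(3) gq_props(1)[OF cq lam, of c] by simp
      moreover have "c # zs \<in> Lst V" using t(2) cV by (simp add: Lst_def)
      ultimately show ?thesis using t(1) by blast
    qed
  qed
qed

lemma Fe_pos:
  assumes cq: "conservative_Q q" and irr: "irreducible_Q q" and lam: "lam \<ge> 0"
    and z: "z \<notin> V" and w0: "w0 \<in> V"
  shows "\<exists>w\<in>V. Fe q lam z (insert z V) w > 0"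
proof -
  have "(z, w0) \<in> {(c, d). c \<noteq> d \<and> q c d > 0}\<^sup>*" using irr unfolding irreducible_Q_def by blast
  from reach_path[OF cq lam this w0] z obtain t zs where t: "t \<in> V" "zs \<in> Lst V" "pw q lam z zs t > 0"
    by auto
  have "\<exists>bs. bs \<in> Lst (insert z V) \<and> pw q lam z bs t > 0"
  proof (cases "z \<in> set zs")
    case True
    then obtain as bs where zs: "zs = as @ z # bs" "z \<notin> set bs" using split_list_last by metis
    have "pw q lam z as z * gq q lam z * pw q lam z bs t > 0" using t(3) unfolding zs pw_append .
    hence "pw q lam z bs t \<noteq> 0" by auto
    hence "pw q lam z bs t > 0" using pw_nonneg[OF cq lam, of z bs t] by simp
    moreover have "bs \<in> Lst (insert z V)" using t(2) zs unfolding Lst_def by auto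
    ultimately show ?thesis by blast
  next
    case False thus ?thesis using t unfolding Lst_def by auto
  qed
  then obtain bs where bs: "bs \<in> Lst (insert z V)" "pw q lam z bs t > 0" by blast
  have "ennreal (pw q lam z bs t) \<le> Fe q lam z (insert z V) t"
    unfolding Fe_def by (rule nn_integral_ge_point[OF bs(1)])
  moreover have "ennreal (pw q lam z bs t) > 0" using bs(2) by simp
  ultimately have "Fe q lam z (insert z V) t > 0" by (rule less_le_trans[rotated])
  thus ?thesis using t(1) by blast
qed

lemma d_lt1:
  assumes cq: "conservative_Q q" and irr: "irreducible_Q q" and lam: "lam \<ge> 0"
    and z: "z \<notin> V" and w0: "w0 \<in> V"
  shows "gq q lam z * enn2real (Fe q lam z (insert z V) z) < 1"
proof -
  obtain w where w: "w \<in> V" "Fe q lam z (insert z V) w > 0" using Fe_pos[OF assms] by blast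
  have zw: "z \<noteq> w" using w z by auto
  have "(\<Sum>t\<in>{z, w}. Fe q lam z (insert z V) t) \<le> 1"
    by (rule Fe_bound[OF cq lam]) (use w in auto)
  hence s: "Fe q lam z (insert z V) z + Fe q lam z (insert z V) w \<le> 1" using zw by simp
  define a where "a = enn2real (Fe q lam z (insert z V) z)"
  define b where "b = enn2real (Fe q lam z (insert z V) w)"
  have ea: "Fe q lam z (insert z V) z = ennreal a" unfolding a_def by (rule Fe_real[OF cq lam]) simp
  have eb: "Fe q lam z (insert z V) w = ennreal b" unfolding b_def by (rule Fe_real[OF cq lam]) (simp add: w(1))
  have ab0: "a \<ge> 0" "b \<ge> 0" unfolding a_def b_def by auto
  have "ennreal a + ennreal b \<le> 1" using s unfolding ea eb .
  hence "ennreal (a + b) \<le> 1" unfolding ennreal_plus[OF ab0, symmetric] .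
  hence "a + b \<le> 1" by (simp only: ennreal_le_1)
  moreover have "b > 0" using w(2) unfolding eb by (simp only: ennreal_less_zero_iff)
  ultimately have a1: "a < 1" by simp
  have "gq q lam z * a \<le> 1 * a" using gq_props(2)[OF cq lam, of z] ab0 by (intro mult_right_mono) auto
  thus ?thesis using a1 unfolding a_def by simp
qed




lemma D_schur:
  fixes q :: "'s::countable \<Rightarrow> 's \<Rightarrow> real" and v :: "nat \<Rightarrow> 's"
  assumes cq: "conservative_Q q" and irr: "irreducible_Q q" and lam: "lam \<ge> 0"
    and inj: "inj_on v {..<Suc n}" and n: "n > 0"
    and an: "alpha n = 0" and mn: "m n = 0" and Gn: "G n lam = gq q lam (v n)"
    and par: "\<forall>i<n. 0 \<le> alpha i \<and> alpha i \<le> 1 \<and> 0 \<le> m i \<and> 0 \<le> G i lam"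
  shows "(perron_root (D_mat q n v alpha m G lam) < 1 \<longleftrightarrow> perron_root (D_mat q (Suc n) v alpha m G lam) < 1) \<and>
         (perron_root (D_mat q n v alpha m G lam) \<le> 1 \<longleftrightarrow> perron_root (D_mat q (Suc n) v alpha m G lam) \<le> 1)"
proof -
  define V where "V = v ` {..<n}"
  define z where "z = v n"
  have z: "z \<notin> V" using inj unfolding V_def z_def inj_on_def by force
  have Vsuc: "v ` {..<Suc n} = insert z V" unfolding V_def z_def by (simp add: lessThan_Suc)
  define F where "F u A t = enn2real (Fe q lam u A t)" for u A t
  have F0: "F u A t \<ge> 0" for u A t unfolding F_def by simp
  define M where "M = D_mat q (Suc n) v alpha m G lam"
  define S where "S = D_mat q n v alpha m G lam"
  have M: "M \<in> carrier_mat (Suc n) (Suc n)" unfolding M_def D_mat_def by simp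
  have S: "S \<in> carrier_mat n n" unfolding S_def D_mat_def by simp
  have Ment: "M $$ (i,j) = (if i = j then alpha i * m i * G i lam else 0)
      + (1 - alpha i) * G i lam * F (v i) (insert z V) (v j)" if "i < Suc n" "j < Suc n" for i j
  proof -
    have e: "insert (v j) (v ` {..<Suc n} - {v j}) = insert z V" using that Vsuc by auto
    have "M $$ (i,j) = (if i = j then alpha i * m i * G i lam else 0)
      + (1 - alpha i) * G i lam * taboo_Fstar q (v ` {..<Suc n} - {v j}) (v i) (v j) lam"
      unfolding M_def D_mat_def using that by simp
    thus ?thesis unfolding taboo_Fe e F_def .
  qed
  have Sent: "S $$ (i,j) = (if i = j then alpha i * m i * G i lam else 0)
      + (1 - alpha i) * G i lam * F (v i) V (v j)" if "i < n" "j < n" for i j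
  proof -
    have e: "insert (v j) (v ` {..<n} - {v j}) = V" using that unfolding V_def by auto
    have "S $$ (i,j) = (if i = j then alpha i * m i * G i lam else 0)
      + (1 - alpha i) * G i lam * taboo_Fstar q (v ` {..<n} - {v j}) (v i) (v j) lam"
      unfolding S_def D_mat_def using that by simp
    thus ?thesis unfolding taboo_Fe e F_def .
  qed
  have gz: "gq q lam z > 0" "gq q lam z \<le> 1" using gq_props[OF cq lam] by auto
  have par': "0 \<le> alpha i \<and> alpha i \<le> 1 \<and> 0 \<le> m i \<and> 0 \<le> G i lam" if "i < Suc n" for i
  proof (cases "i = n")
    case True thus ?thesis using an mn Gn gz unfolding z_def by simp
  next
    case False thus ?thesis using par that by simp
  qed
  have nn: "\<forall>i<Suc n. \<forall>j<Suc n. M$$(i,j) \<ge> 0"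
  proof (intro allI impI)
    fix i j assume ij: "i < Suc n" "j < Suc n"
    have "0 \<le> alpha i * m i * G i lam" using par'[OF ij(1)] by (intro mult_nonneg_nonneg) auto
    hence "0 \<le> (if i = j then alpha i * m i * G i lam else 0)" by auto
    moreover have "0 \<le> (1 - alpha i) * G i lam * F (v i) (insert z V) (v j)"
      using par'[OF ij(1)] F0 by (intro mult_nonneg_nonneg) auto
    ultimately show "M$$(i,j) \<ge> 0" unfolding Ment[OF ij] by simp
  qed
  define dd where "dd = gq q lam z * F z (insert z V) z"
  have Mnn: "M $$ (n,n) = dd" unfolding Ment[of n n, OF lessI lessI] dd_def using an Gn unfolding z_def by simp
  obtain w0 where w0: "w0 \<in> V" using n unfolding V_def by auto
  have d: "dd < 1" unfolding dd_def F_def by (rule d_lt1[OF cq irr lam z w0])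
  have Seq: "\<forall>i<n. \<forall>j<n. S$$(i,j) = M$$(i,j) + M$$(i,n) * M$$(n,j) / (1 - M$$(n,n))"
  proof (intro allI impI)
    fix i j assume i: "i < n" and j: "j < n"
    have vj: "v j \<in> V" using j unfolding V_def by auto
    have in_: "i \<noteq> n" "n \<noteq> j" using i j by auto
    have Min: "M $$ (i,n) = (1 - alpha i) * G i lam * F (v i) (insert z V) z"
      using Ment[of i n] i in_ unfolding z_def by simp
    have Mnj: "M $$ (n,j) = gq q lam z * F z (insert z V) (v j)"
      using Ment[of n j] j in_ an Gn unfolding z_def by simp
    have D1: "F (v i) V (v j) = F (v i) (insert z V) (v j) + F (v i) (insert z V) z * gq q lam z * F z V (v j)"
      unfolding F_def by (rule Fr_decomp[OF cq lam z vj])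
    have D2: "F z V (v j) = F z (insert z V) (v j) + F z (insert z V) z * gq q lam z * F z V (v j)"
      unfolding F_def by (rule Fr_decomp[OF cq lam z vj])
    have D3: "F z V (v j) = F z (insert z V) (v j) / (1 - dd)"
    proof -
      define X where "X = F z V (v j)"
      define a where "a = F z (insert z V) (v j)"
      define b where "b = F z (insert z V) z"
      define g where "g = gq q lam z"
      have "X = a + b * g * X" using D2 unfolding X_def a_def b_def g_def .
      hence "X * (1 - g * b) = a" by (simp add: algebra_simps)
      moreover have "1 - g * b \<noteq> 0" using d unfolding dd_def g_def b_def by simp
      ultimately have "X = a / (1 - g * b)" by (simp add: eq_divide_eq)
      thus ?thesis unfolding X_def a_def b_def g_def dd_def .
    qed
    have "S$$(i,j) = (if i = j then alpha i * m i * G i lam else 0)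
      + (1 - alpha i) * G i lam * (F (v i) (insert z V) (v j) + F (v i) (insert z V) z * gq q lam z * (F z (insert z V) (v j) / (1 - dd)))"
      unfolding Sent[OF i j] D1 D3 ..
    also have "\<dots> = M$$(i,j) + M$$(i,n) * M$$(n,j) / (1 - M$$(n,n))"
    proof -
      have Mij: "M$$(i,j) = (if i = j then alpha i * m i * G i lam else 0)
          + (1 - alpha i) * G i lam * F (v i) (insert z V) (v j)" using Ment[of i j] i j by simp
      have nz: "1 - dd \<noteq> 0" using d by simp
      show ?thesis unfolding Mij Min Mnj Mnn using nz by (simp add: field_simps)
    qed
    finally show "S$$(i,j) = M$$(i,j) + M$$(i,n) * M$$(n,j) / (1 - M$$(n,n))" .
  qed
  have "M $$ (n,n) < 1" using Mnn d by simp
  from schur_perron[OF M S n nn this Seq] show ?thesis unfolding M_def S_def .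
qed



theorem lemma3:
  fixes q :: "'s::countable \<Rightarrow> 's \<Rightarrow> real"
    and N :: nat and w :: "nat \<Rightarrow> 's"
    and alpha beta :: "nat \<Rightarrow> real" and f :: "nat \<Rightarrow> nat pmf"
    and x y :: 's and lam :: real
  assumes "conservative_Q q" and "irreducible_Q q"
    and "N \<ge> 1" and "inj_on w {..<N}"
    and "\<forall>k<N. beta k > 0"
    and "\<forall>k<N. 0 \<le> alpha k \<and> alpha k < 1"
    and "\<forall>k<N. integrable (measure_pmf (f k)) real"
    and "x \<notin> w ` {..<N}" and "y \<notin> w ` {..<N}" and "y \<noteq> x"
    and "lam \<ge> 0"
  defines "w' \<equiv> w(N := x, Suc N := y)"
    and "alpha' \<equiv> alpha(N := 0, Suc N := 0)"
    and "m' \<equiv> (\<lambda>k. if k < N then gf_deriv1 (f k) else 0)"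
    and "G' \<equiv> (\<lambda>k l. if k < N then beta k / (l + beta k)
                 else if k = N then - q x x / (l - q x x)
                 else - q y y / (l - q y y))"
  shows "(perron_root (D_mat q N w' alpha' m' G' lam) > 1 \<and>
          perron_root (D_mat q (Suc N) w' alpha' m' G' lam) > 1 \<and>
          perron_root (D_mat q (Suc (Suc N)) w' alpha' m' G' lam) > 1) \<or>
         (perron_root (D_mat q N w' alpha' m' G' lam) = 1 \<and>
          perron_root (D_mat q (Suc N) w' alpha' m' G' lam) = 1 \<and>
          perron_root (D_mat q (Suc (Suc N)) w' alpha' m' G' lam) = 1) \<or>
         (perron_root (D_mat q N w' alpha' m' G' lam) < 1 \<and>
          perron_root (D_mat q (Suc N) w' alpha' m' G' lam) < 1 \<and>
          perron_root (D_mat q (Suc (Suc N)) w' alpha' m' G' lam) < 1)"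
proof -
  have cq: "conservative_Q q" and irr: "irreducible_Q q" and lam: "lam \<ge> 0" using assms by auto
  have injw: "inj_on w {..<N}" using assms(4) .
  have inj1: "inj_on w' {..<Suc N}"
    using injw assms(8) unfolding w'_def inj_on_def by (auto simp: lessThan_Suc)
  have inj2: "inj_on w' {..<Suc (Suc N)}"
    using injw assms(8,9,10) unfolding w'_def inj_on_def by (auto simp: less_Suc_eq)
  have gx: "G' N lam = gq q lam (w' N)" unfolding G'_def w'_def gq_def by simp
  have gy: "G' (Suc N) lam = gq q lam (w' (Suc N))" unfolding G'_def w'_def gq_def by simp
  have m0: "0 \<le> m' i" for i
    unfolding m'_def gf_deriv1_def by (auto intro!: Bochner_Integration.integral_nonneg)
  have parN: "\<forall>i<N. 0 \<le> alpha' i \<and> alpha' i \<le> 1 \<and> 0 \<le> m' i \<and> 0 \<le> G' i lam"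
  proof (intro allI impI)
    fix i assume i: "i < N"
    have "beta i > 0" using assms(5) i by auto
    hence "0 \<le> beta i / (lam + beta i)" using lam by (intro divide_nonneg_pos) auto
    thus "0 \<le> alpha' i \<and> alpha' i \<le> 1 \<and> 0 \<le> m' i \<and> 0 \<le> G' i lam"
      using assms(6) i m0[of i] unfolding alpha'_def G'_def by auto
  qed
  have parSN: "\<forall>i<Suc N. 0 \<le> alpha' i \<and> alpha' i \<le> 1 \<and> 0 \<le> m' i \<and> 0 \<le> G' i lam"
  proof (intro allI impI)
    fix i assume i: "i < Suc N"
    show "0 \<le> alpha' i \<and> alpha' i \<le> 1 \<and> 0 \<le> m' i \<and> 0 \<le> G' i lam"
    proof (cases "i = N")
      case True
      have "gq q lam (w' N) > 0" using gq_props(1)[OF cq lam] by simp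
      thus ?thesis using True gx m0[of i] unfolding alpha'_def by simp
    next
      case False thus ?thesis using parN i by simp
    qed
  qed
  have N0: "N > 0" using assms(3) by simp
  have aN: "alpha' N = 0" "alpha' (Suc N) = 0" unfolding alpha'_def by auto
  have mN: "m' N = 0" "m' (Suc N) = 0" unfolding m'_def by auto
  note e1 = D_schur[where q=q and lam=lam and n=N and v=w' and alpha=alpha' and m=m' and G=G', OF cq irr lam inj1 N0 aN(1) mN(1) gx parN]
  note e2 = D_schur[where q=q and lam=lam and n="Suc N" and v=w' and alpha=alpha' and m=m' and G=G', OF cq irr lam inj2 zero_less_Suc aN(2) mN(2) gy parSN]
  show ?thesis using e1 e2 by auto
qed


end
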